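(* Let $\beta\in\mathbb{F}_{p^m}\setminus\{0\}$ and let $\mathcal{C}=\left\langle\left(x^2+\gamma x+\frac{\gamma^2}{2}\right)^i\left(x^2-\gamma x+\frac{\gamma^2}{2}\right)^j\right\rangle$ be an ideal of $R[x]/\langle x^{4p^s}-(\alpha+\beta u)\rangle$ with $0\le i,j\le 2p^s$. Then $|\mathcal{C}|=p^{m(8p^s-2i-2j)}$.
   Context: Let $p$ be an odd prime and $m,s$ positive integers with $p^m\equiv 3\pmod 4$; $\mathbb{F}_{p^m}$ is the field with $p^m$ elements and $R=\mathbb{F}_{p^m}[u]/\langle u^2\rangle$. Fix $\alpha\in\mathbb{F}_{p^m}\setminus\{0\}$ that is not a square in $\mathbb{F}_{p^m}$, let $\alpha_0\in\mathbb{F}_{p^m}$ satisfy $\alpha_0^{p^s}=\alpha$, and let $\gamma\in\mathbb{F}_{p^m}$ satisfy $\gamma^4+4\alpha_0=0$. *)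

theory Defs
  imports "HOL-Algebra.Algebra"
begin

text \<open>The ring R = F[u]/(u^2) = F + uF, with an element a + b u represented as the pair (a, b).\<close>
definition dual_mult :: "'a::field \<times> 'a \<Rightarrow> 'a \<times> 'a \<Rightarrow> 'a \<times> 'a" where
  "dual_mult x y = (fst x * fst y, fst x * snd y + snd x * fst y)"

definition dual_add :: "'a::field \<times> 'a \<Rightarrow> 'a \<times> 'a \<Rightarrow> 'a \<times> 'a" where
  "dual_add x y = (fst x + fst y, snd x + snd y)"

definition dual_ring :: "('a::field \<times> 'a) ring" where
  "dual_ring = \<lparr>carrier = UNIV, monoid.mult = dual_mult, monoid.one = (1, 0),
      ring.zero = (0, 0), ring.add = dual_add\<rparr>"

abbreviation Rx :: "('a::field \<times> 'a, nat \<Rightarrow> 'a \<times> 'a) up_ring" where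
  "Rx \<equiv> UP dual_ring"

definition binom_poly :: "nat \<Rightarrow> 'a::field \<times> 'a \<Rightarrow> nat \<Rightarrow> 'a \<times> 'a" where
  "binom_poly n lam = monom Rx \<one>\<^bsub>dual_ring\<^esub> n \<ominus>\<^bsub>Rx\<^esub> monom Rx lam 0"

definition quot_ring :: "nat \<Rightarrow> 'a::field \<times> 'a \<Rightarrow> _" where
  "quot_ring n lam = Rx Quot (PIdl\<^bsub>Rx\<^esub> (binom_poly n lam))"

definition cmonom :: "'a::field \<Rightarrow> nat \<Rightarrow> nat \<Rightarrow> 'a \<times> 'a" where
  "cmonom c k = monom Rx (c, 0) k"

definition quad_poly :: "'a::field \<Rightarrow> 'a \<Rightarrow> nat \<Rightarrow> 'a \<times> 'a" where
  "quad_poly c g = cmonom 1 2 \<oplus>\<^bsub>Rx\<^esub> cmonom c 1 \<oplus>\<^bsub>Rx\<^esub> cmonom (g^2 / 2) 0"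

end

theory Submission
  imports Defs "HOL-Computational_Algebra.Polynomial" "HOL-Computational_Algebra.Primes" "HOL-Number_Theory.Residues"
begin


lemma dual_cring: "cring (dual_ring :: ('a::field \<times> 'a) ring)"
  apply (rule cringI)
    apply (rule abelian_groupI)
  apply (auto simp: dual_ring_def dual_add_def dual_mult_def)
  apply (metis add.left_inverse)
  apply (metis add.left_inverse)
    apply (rule comm_monoidI)
  apply (auto simp: dual_ring_def dual_add_def dual_mult_def algebra_simps)
  done

lemma UP_cring_dual: "UP_cring (dual_ring :: ('a::field \<times> 'a) ring)"
  by (simp add: UP_cring_def dual_cring)

lemma cring_Rx: "cring (Rx :: ('a::field \<times> 'a, _) up_ring)"
  using UP_cring.UP_cring[OF UP_cring_dual] by simp



definition mk :: "'a::field poly \<Rightarrow> 'a poly \<Rightarrow> nat \<Rightarrow> 'a \<times> 'a" where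
  "mk a b = (\<lambda>n. (Polynomial.coeff a n, Polynomial.coeff b n))"

lemma carrier_Rx: "carrier (Rx :: ('a::field \<times> 'a, _) up_ring) = {f. \<exists>n. bound (0,0) n f}"
  by (auto simp: UP_def up_def dual_ring_def)

lemma mk_carrier: "mk a b \<in> carrier Rx"
  unfolding carrier_Rx
proof -
  have "bound (0,0) (max (degree a) (degree b)) (mk a b)"
    by (auto simp: bound_def mk_def coeff_eq_0)
  thus "mk a b \<in> {f. \<exists>n. bound (0, 0) n f}" by blast
qed

lemma carrier_mk:
  assumes "f \<in> carrier Rx"
  shows "\<exists>a b. f = mk a b"
proof -
  from assms obtain n where n: "bound (0,0) n f" unfolding carrier_Rx by blast
  have c1: "Polynomial.coeff (Abs_poly (fst \<circ> f)) = fst \<circ> f"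
    by (rule coeff_Abs_poly[of n]) (use n in \<open>auto simp: bound_def\<close>)
  have c2: "Polynomial.coeff (Abs_poly (snd \<circ> f)) = snd \<circ> f"
    by (rule coeff_Abs_poly[of n]) (use n in \<open>auto simp: bound_def\<close>)
  have "f = mk (Abs_poly (fst \<circ> f)) (Abs_poly (snd \<circ> f))"
    by (auto simp: mk_def c1 c2 fun_eq_iff)
  thus ?thesis by blast
qed

lemma mk_eq_iff: "mk a b = mk c d \<longleftrightarrow> a = c \<and> b = d"
  by (auto simp: mk_def fun_eq_iff poly_eq_iff)

lemma add_mk: "mk a b \<oplus>\<^bsub>Rx\<^esub> mk c d = mk (a + c) (b + d)"
  using mk_carrier[of a b] mk_carrier[of c d]
  by (auto simp: UP_def mk_def dual_ring_def dual_add_def)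

lemma finsum_dual:
  fixes f :: "'b \<Rightarrow> 'a::field \<times> 'a"
  assumes "finite A"
  shows "finsum dual_ring f A = (\<Sum>i\<in>A. fst (f i), \<Sum>i\<in>A. snd (f i))"
  using assms
proof (induction A rule: finite_induct)
  case empty
  have am: "abelian_monoid (dual_ring :: ('a \<times> 'a) ring)"
    by (rule abelian_group.axioms(1)[OF ring.axioms(1)[OF cring.axioms(1)[OF dual_cring]]])
  then show ?case
    using abelian_monoid.finsum_empty[OF am]
    by (simp add: dual_ring_def)
next
  case (insert x F)
  have am: "abelian_monoid (dual_ring :: ('a \<times> 'a) ring)"
    by (rule abelian_group.axioms(1)[OF ring.axioms(1)[OF cring.axioms(1)[OF dual_cring]]])
  have "finsum dual_ring f (insert x F) = f x \<oplus>\<^bsub>dual_ring\<^esub> finsum dual_ring f F"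
    by (rule abelian_monoid.finsum_insert[OF am]) (use insert in \<open>auto simp: dual_ring_def\<close>)
  then show ?case using insert by (simp add: dual_ring_def dual_add_def)
qed

lemma mult_mk: "mk a b \<otimes>\<^bsub>Rx\<^esub> mk c d = mk (a * c) (a * d + b * c)"
  using mk_carrier[of a b] mk_carrier[of c d]
  by (auto simp: UP_def mk_def finsum_dual coeff_mult sum.distrib algebra_simps fun_eq_iff)
  (auto simp: dual_ring_def dual_mult_def sum.distrib)



lemma monom_mk: "up_ring.monom Rx a n = mk (Polynomial.monom (fst a) n) (Polynomial.monom (snd a) n)"
  by (auto simp: UP_def mk_def dual_ring_def fun_eq_iff Polynomial.coeff_monom)

lemma one_mk: "\<one>\<^bsub>Rx\<^esub> = mk 1 0"
  by (auto simp: UP_def mk_def dual_ring_def fun_eq_iff coeff_1)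

lemma zero_mk: "\<zero>\<^bsub>Rx\<^esub> = mk 0 0"
  by (auto simp: UP_def mk_def dual_ring_def fun_eq_iff)

lemma pow_mk: "(mk a 0) [^]\<^bsub>Rx\<^esub> (n::nat) = mk (a ^ n) 0"
  by (induction n) (simp_all add: one_mk mult_mk algebra_simps)

lemma minus_mk: "mk a b \<ominus>\<^bsub>Rx\<^esub> mk c d = mk (a - c) (b - d)"
proof -
  interpret R: cring Rx by (rule cring_Rx)
  have "\<ominus>\<^bsub>Rx\<^esub> mk c d = mk (-c) (-d)"
    by (rule R.minus_equality) (simp_all add: add_mk zero_mk mk_carrier)
  thus ?thesis by (simp add: a_minus_def add_mk)
qed

lemma binom_mk: "binom_poly n (al::'a::field, be) = mk (Polynomial.monom 1 n - [:al:]) (- [:be:])"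
proof -
  have "\<one>\<^bsub>dual_ring\<^esub> = ((1::'a), (0::'a))" by (simp add: dual_ring_def)
  thus ?thesis unfolding binom_poly_def monom_mk minus_mk by (simp add: monom_0)
qed

lemma cmonom_mk: "cmonom c k = mk (Polynomial.monom c k) 0"
  by (simp add: cmonom_def monom_mk)

lemma quad_mk: "quad_poly c g = mk [:g^2/2, c, 1:] 0"
proof -
  have "Polynomial.monom 1 2 + Polynomial.monom c 1 + Polynomial.monom (g^2/2) 0 = [:g^2/2, c, 1:]"
    by (auto simp: poly_eq_iff coeff_pCons Polynomial.coeff_monom numeral_2_eq_2 split: nat.split)
  thus ?thesis by (simp add: quad_poly_def cmonom_mk add_mk)
qed



definition Sdeg :: "nat \<Rightarrow> 'a::zero poly set" where
  "Sdeg K = {c. \<forall>n\<ge>K. Polynomial.coeff c n = 0}"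

lemma card_Sdeg: "card (Sdeg K :: 'a::{finite,zero} poly set) = card (UNIV :: 'a set) ^ K"
proof -
  let ?r = "\<lambda>c::'a poly. restrict (Polynomial.coeff c) {..<K}"
  have inj: "inj_on ?r (Sdeg K)"
  proof (rule inj_onI)
    fix x y assume x: "x \<in> Sdeg K" and y: "y \<in> Sdeg K" and e: "?r x = ?r y"
    show "x = y"
    proof (rule poly_eqI)
      fix n show "Polynomial.coeff x n = Polynomial.coeff y n"
      proof (cases "n < K")
        case True thus ?thesis using fun_cong[OF e, of n] by simp
      next
        case False thus ?thesis using x y by (simp add: Sdeg_def)
      qed
    qed
  qed
  have img: "?r ` Sdeg K = PiE {..<K} (\<lambda>_. UNIV)"
  proof
    show "?r ` Sdeg K \<subseteq> PiE {..<K} (\<lambda>_. UNIV)" by (rule image_subsetI, subst restrict_PiE_iff) auto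
  next
    show "PiE {..<K} (\<lambda>_. UNIV) \<subseteq> ?r ` Sdeg K"
    proof
      fix f assume f: "f \<in> PiE {..<K} (\<lambda>_. (UNIV :: 'a set))"
      define g where "g = (\<lambda>n. if n < K then f n else 0)"
      have cg: "Polynomial.coeff (Abs_poly g) = g"
        by (rule coeff_Abs_poly[of K]) (auto simp: g_def)
      have "\<forall>n\<ge>K. g n = 0" by (simp add: g_def)
      hence "Abs_poly g \<in> Sdeg K" by (simp add: Sdeg_def cg)
      moreover have "?r (Abs_poly g) = f"
      proof (rule ext)
        fix n show "?r (Abs_poly g) n = f n"
        proof (cases "n < K")
          case True thus ?thesis by (simp add: cg) (simp add: g_def)
        next
          case False thus ?thesis using PiE_arb[OF f, of n] by simp
        qed
      qed
      ultimately show "f \<in> ?r ` Sdeg K" by blast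
    qed
  qed
  have "card (Sdeg K :: 'a poly set) = card (?r ` Sdeg K)" using card_image[OF inj] by simp
  also have "\<dots> = card (UNIV :: 'a set) ^ K" by (simp add: img card_PiE)
  finally show ?thesis .
qed

lemma Sdeg_diff: "c \<in> Sdeg K \<Longrightarrow> c' \<in> Sdeg K \<Longrightarrow> c - c' \<in> Sdeg K"
  by (simp add: Sdeg_def)

lemma Sdeg_degree: "c \<in> Sdeg K \<Longrightarrow> c \<noteq> 0 \<Longrightarrow> degree c < K"
proof (rule ccontr)
  assume "c \<in> Sdeg K" "c \<noteq> 0" "\<not> degree c < K"
  hence "lead_coeff c = 0" by (simp add: Sdeg_def)
  thus False using \<open>c \<noteq> 0\<close> by simp
qed



lemma poly_inj:
  fixes A wp qq c c' H0 H1 :: "'a::field poly"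
  assumes "wp * qq = A ^ 2" "A \<noteq> 0" "be \<noteq> 0"
    and "c * wp = H0 * A + c' * wp" "0 = H0 * (- [:be:]) + H1 * A"
    and "c \<in> Sdeg (degree qq)" "c' \<in> Sdeg (degree qq)"
  shows "c = c'"
proof (rule ccontr)
  assume ne: "c \<noteq> c'"
  have wp0: "wp \<noteq> 0" and qq0: "qq \<noteq> 0" using assms(1,2) by auto
  have h0: "H0 = smult (1/be) (H1 * A)"
  proof -
    have "smult be H0 = H1 * A" using assms(5) by (simp add: algebra_simps)
    hence "smult (1/be) (smult be H0) = smult (1/be) (H1 * A)" by simp
    thus ?thesis using assms(3) by simp
  qed
  have "(c - c') * wp = H0 * A" using assms(4) by (simp add: algebra_simps)
  also have "\<dots> = smult (1/be) (H1 * A^2)" by (simp add: h0 power2_eq_square algebra_simps)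
  also have "\<dots> = (smult (1/be) (H1 * qq)) * wp" by (simp add: assms(1)[symmetric] algebra_simps)
  finally have "(c - c') * wp = (smult (1/be) (H1 * qq)) * wp" by simp
  hence eq: "c - c' = smult (1/be) (H1 * qq)" using wp0 by (metis mult_cancel_right)
  have d: "degree (c - c') < degree qq"
    using Sdeg_degree[OF Sdeg_diff[OF assms(6,7)]] ne by simp
  have "H1 \<noteq> 0" using eq ne by auto
  hence "degree (smult (1/be) (H1 * qq)) \<ge> degree qq"
    using assms(3) qq0 by (simp add: degree_mult_eq)
  thus False using d eq by simp
qed

lemma poly_surj:
  fixes A wp qq h0 h1 :: "'a::field poly"
  assumes "wp * qq = A ^ 2" "A \<noteq> 0" "be \<noteq> 0"
  shows "\<exists>c H0 H1. c \<in> Sdeg (degree qq) \<and> h0 * wp = H0 * A + c * wp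
            \<and> h1 * wp = H0 * (- [:be:]) + H1 * A"
proof -
  have qq0: "qq \<noteq> 0" using assms(1,2) by auto
  define e where "e = h0 + smult (1/be) (A * h1)"
  define k where "k = e div qq"
  define c where "c = e mod qq"
  have ekc: "e = k * qq + c" unfolding k_def c_def by simp
  have cS: "c \<in> Sdeg (degree qq)"
  proof (cases "c = 0")
    case True thus ?thesis by (simp add: Sdeg_def)
  next
    case False
    hence "degree c < degree qq" unfolding c_def using degree_mod_less[OF qq0] by blast
    thus ?thesis by (auto simp: Sdeg_def coeff_eq_0)
  qed
  define H0 where "H0 = k * A - smult (1/be) (h1 * wp)"
  define H1 where "H1 = smult be k"
  have "H0 * A + c * wp = k * A^2 + c * wp - smult (1/be) (A * h1 * wp)"
    by (simp add: H0_def power2_eq_square algebra_simps)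
  also have "\<dots> = (k * qq + c) * wp - smult (1/be) (A * h1 * wp)"
    by (simp add: assms(1)[symmetric] algebra_simps)
  also have "(k * qq + c) * wp = e * wp" by (simp add: ekc)
  also have "e * wp - smult (1/be) (A * h1 * wp) = h0 * wp"
    by (simp add: e_def algebra_simps)
  finally have 1: "h0 * wp = H0 * A + c * wp" by simp
  have 2: "h1 * wp = H0 * (- [:be:]) + H1 * A"
    using assms(3) by (simp add: H0_def H1_def algebra_simps)
  show ?thesis using cS 1 2 by blast
qed



lemma coset_mem: "x \<in> I +>\<^bsub>G\<^esub> b \<longleftrightarrow> (\<exists>h\<in>I. x = h \<oplus>\<^bsub>G\<^esub> b)"
  unfolding a_r_coset_def' by auto

lemma main_count:
  fixes A wp qq :: "'a::{finite,field} poly"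
  assumes wq: "wp * qq = A ^ 2" and A0: "A \<noteq> 0" and be0: "be \<noteq> 0"
  defines "I \<equiv> PIdl\<^bsub>Rx\<^esub> (mk A (- [:be:]))"
  shows "card (Idl\<^bsub>Rx Quot I\<^esub> {I +>\<^bsub>Rx\<^esub> mk wp 0}) = card (UNIV :: 'a set) ^ degree qq"
proof -
  interpret R: cring Rx by (rule cring_Rx)
  let ?P = "mk A (- [:be:])"
  have Pc: "?P \<in> carrier Rx" by (rule mk_carrier)
  have idl: "ideal I Rx" unfolding I_def by (rule R.cgenideal_ideal[OF Pc])
  interpret I: ideal I Rx by (rule idl)
  have Q: "cring (Rx Quot I)" by (rule I.quotient_is_cring[OF cring_Rx])
  have hom: "(+>\<^bsub>Rx\<^esub>) I \<in> ring_hom Rx (Rx Quot I)" by (rule I.rcos_ring_hom)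
  let ?W = "mk wp 0"
  have Xc: "I +>\<^bsub>Rx\<^esub> ?W \<in> carrier (Rx Quot I)"
    by (rule ring_hom_closed[OF hom mk_carrier])
  have carQ: "carrier (Rx Quot I) = {I +>\<^bsub>Rx\<^esub> h | h. h \<in> carrier Rx}"
    by (auto simp: FactRing_def A_RCOSETS_def')
  have Iset: "I = {x \<otimes>\<^bsub>Rx\<^esub> ?P | x. x \<in> carrier Rx}" unfolding I_def cgenideal_def by simp
  have "Idl\<^bsub>Rx Quot I\<^esub> {I +>\<^bsub>Rx\<^esub> ?W} = PIdl\<^bsub>Rx Quot I\<^esub> (I +>\<^bsub>Rx\<^esub> ?W)"
    by (rule cring.cgenideal_eq_genideal[OF Q Xc, symmetric])
  also have "\<dots> = {I +>\<^bsub>Rx\<^esub> (h \<otimes>\<^bsub>Rx\<^esub> ?W) | h. h \<in> carrier Rx}"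
  proof -
    have "\<And>h. h \<in> carrier Rx \<Longrightarrow> (I +>\<^bsub>Rx\<^esub> h) \<otimes>\<^bsub>Rx Quot I\<^esub> (I +>\<^bsub>Rx\<^esub> ?W) = I +>\<^bsub>Rx\<^esub> (h \<otimes>\<^bsub>Rx\<^esub> ?W)"
      using ring_hom_mult[OF hom _ mk_carrier] by simp
    thus ?thesis unfolding cgenideal_def carQ by blast
  qed
  also have "\<dots> = (\<lambda>c. I +>\<^bsub>Rx\<^esub> mk (c * wp) 0) ` Sdeg (degree qq)"
  proof
    show "{I +>\<^bsub>Rx\<^esub> (h \<otimes>\<^bsub>Rx\<^esub> ?W) | h. h \<in> carrier Rx} \<subseteq> (\<lambda>c. I +>\<^bsub>Rx\<^esub> mk (c * wp) 0) ` Sdeg (degree qq)"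
    proof clarify
      fix h :: "nat \<Rightarrow> 'a \<times> 'a" assume hc: "h \<in> carrier Rx"
      obtain h0 h1 :: "'a poly" where h: "h = mk h0 h1" using carrier_mk[OF hc] by blast
      obtain c H0 H1 :: "'a poly" where c: "c \<in> Sdeg (degree qq)" and e1: "h0 * wp = H0 * A + c * wp"
        and e2: "h1 * wp = H0 * (- [:be:]) + H1 * A"
        using poly_surj[OF wq A0 be0, of h0 h1] by blast
      have "h \<otimes>\<^bsub>Rx\<^esub> ?W = (mk H0 H1 \<otimes>\<^bsub>Rx\<^esub> ?P) \<oplus>\<^bsub>Rx\<^esub> mk (c * wp) 0"
        by (simp add: h mult_mk add_mk mk_eq_iff e1 e2)
      moreover have "mk H0 H1 \<otimes>\<^bsub>Rx\<^esub> ?P \<in> I" unfolding Iset using mk_carrier by blast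
      ultimately have "h \<otimes>\<^bsub>Rx\<^esub> ?W \<in> I +>\<^bsub>Rx\<^esub> mk (c * wp) 0" unfolding coset_mem by blast
      hence "I +>\<^bsub>Rx\<^esub> mk (c * wp) 0 = I +>\<^bsub>Rx\<^esub> (h \<otimes>\<^bsub>Rx\<^esub> ?W)"
        by (rule I.a_repr_independence'[OF _ mk_carrier])
      thus "I +>\<^bsub>Rx\<^esub> (h \<otimes>\<^bsub>Rx\<^esub> ?W) \<in> (\<lambda>c. I +>\<^bsub>Rx\<^esub> mk (c * wp) 0) ` Sdeg (degree qq)"
        using c by force
    qed
  next
    show "(\<lambda>c. I +>\<^bsub>Rx\<^esub> mk (c * wp) 0) ` Sdeg (degree qq) \<subseteq> {I +>\<^bsub>Rx\<^esub> (h \<otimes>\<^bsub>Rx\<^esub> ?W) | h. h \<in> carrier Rx}"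
    proof clarify
      fix c :: "'a poly"
      have "mk (c * wp) 0 = mk c 0 \<otimes>\<^bsub>Rx\<^esub> ?W" by (simp add: mult_mk)
      thus "\<exists>h. I +>\<^bsub>Rx\<^esub> mk (c * wp) 0 = I +>\<^bsub>Rx\<^esub> (h \<otimes>\<^bsub>Rx\<^esub> ?W) \<and> h \<in> carrier Rx"
        using mk_carrier by metis
    qed
  qed
  finally have eq: "Idl\<^bsub>Rx Quot I\<^esub> {I +>\<^bsub>Rx\<^esub> ?W} = (\<lambda>c. I +>\<^bsub>Rx\<^esub> mk (c * wp) 0) ` Sdeg (degree qq)" .
  have inj: "inj_on (\<lambda>c. I +>\<^bsub>Rx\<^esub> mk (c * wp) 0) (Sdeg (degree qq))"
  proof (rule inj_onI)
    fix c c' :: "'a poly" assume c: "c \<in> Sdeg (degree qq)" and c': "c' \<in> Sdeg (degree qq)"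
      and e: "I +>\<^bsub>Rx\<^esub> mk (c * wp) 0 = I +>\<^bsub>Rx\<^esub> mk (c' * wp) 0"
    have "mk (c * wp) 0 \<in> I +>\<^bsub>Rx\<^esub> mk (c * wp) 0" by (rule I.a_rcos_self[OF mk_carrier])
    hence "mk (c * wp) 0 \<in> I +>\<^bsub>Rx\<^esub> mk (c' * wp) 0" using e by simp
    then obtain x where xI: "x \<in> I" and x: "mk (c * wp) 0 = x \<oplus>\<^bsub>Rx\<^esub> mk (c' * wp) 0"
      unfolding coset_mem by blast
    obtain H where Hc: "H \<in> carrier Rx" and xH: "x = H \<otimes>\<^bsub>Rx\<^esub> ?P" using xI unfolding Iset by blast
    obtain H0 H1 :: "'a poly" where H: "H = mk H0 H1" using carrier_mk[OF Hc] by blast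
    have "mk (c * wp) 0 = mk (H0 * A + c' * wp) (H0 * (- [:be:]) + H1 * A)"
      using x by (simp add: xH H mult_mk add_mk)
    hence "c * wp = H0 * A + c' * wp" "0 = H0 * (- [:be:]) + H1 * A"
      unfolding mk_eq_iff by simp_all
    thus "c = c'" using poly_inj[OF wq A0 be0 _ _ c c'] by blast
  qed
  show ?thesis unfolding eq card_image[OF inj] by (rule card_Sdeg)
qed



lemma char_eq:
  assumes "Factorial_Ring.prime p" "card (UNIV :: 'a::{finite,field} set) = p ^ m"
  shows "CHAR('a) = p"
proof -
  have pos: "CHAR('a) > 0" by (rule finite_imp_CHAR_pos) simp
  have pr: "Factorial_Ring.prime CHAR('a)" by (rule prime_CHAR_semidom[OF pos])
  have "CHAR('a) dvd p ^ m" using CHAR_dvd_CARD[where 'a='a] assms(2) by simp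
  hence "CHAR('a) dvd p" using pr prime_dvd_power by blast
  thus ?thesis using pr assms(1) by (simp add: primes_dvd_imp_eq)
qed

lemma frob:
  fixes a :: "'a::{finite,field}"
  assumes "Factorial_Ring.prime p" "card (UNIV :: 'a set) = p ^ m" "odd p"
  shows "(Polynomial.monom 1 k - [:a:]) ^ (p ^ s) = Polynomial.monom 1 (k * p ^ s) - [:a ^ (p ^ s):]"
proof -
  have fd: "(Polynomial.monom 1 k + (- [:a:])) ^ (p ^ s) = Polynomial.monom 1 k ^ (p ^ s) + (- [:a:]) ^ (p ^ s)"
    by (rule freshmans_dream'[where 'a = "'a poly" and n = s]) (simp_all add: char_eq[OF assms(1,2)] assms(1))
  have od: "odd (p ^ s)" using assms(3) by simp
  have m: "Polynomial.monom (1::'a) k ^ (p ^ s) = Polynomial.monom 1 (k * p ^ s)" by (simp add: monom_power)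
  have c: "(- [:a:]) ^ (p ^ s) = - [:a ^ (p ^ s):]"
    using power_minus_odd[OF od, of "[:a:]"] by (simp only: poly_const_pow)
  show ?thesis using fd unfolding m c by (simp only: diff_conv_add_uminus)
qed



lemma m4: "Polynomial.monom (1::'a::field) 4 = [:0, 0, 0, 0, 1:]"
  by (simp add: monom_altdef power4_eq_xxxx)

lemma prod3:
  fixes c g :: "'a::field"
  shows "[:c, g, 1:] * [:c, -g, 1:] = [:(c * c), 0, (2 * c - g * g), 0, 1:]"
  by (simp add: mult_pCons_left)

lemma factor:
  fixes g a0 :: "'a::field"
  assumes "g ^ 4 + 4 * a0 = 0" "(2::'a) \<noteq> 0"
  shows "[:g^2/2, g, 1:] * [:g^2/2, -g, 1:] = Polynomial.monom 1 4 - [:a0:]"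
proof -
  have "(4::'a) = 2 * 2" by simp
  hence four: "(4::'a) \<noteq> 0" using assms(2) by (metis mult_eq_0_iff)
  have "(g^2/2) * (g^2/2) = - a0"
  proof -
    have "(g^2/2) * (g^2/2) = g^4 / 4" by (simp add: power4_eq_xxxx power2_eq_square)
    also have "g^4 = - 4 * a0" using assms(1) by (simp add: eq_neg_iff_add_eq_0)
    finally show ?thesis using four by simp
  qed
  moreover have "2 * (g^2/2) - g * g = 0" using assms(2) by (simp add: power2_eq_square)
  ultimately show ?thesis unfolding prod3 m4 by simp
qed



theorem theorem3p6:
  fixes p m s :: nat and \<alpha> \<alpha>0 \<beta> \<gamma> :: "'a::{finite,field}" and i j :: nat
  assumes "Factorial_Ring.prime p" and "odd p" and "m > 0" and "s > 0"
    and "card (UNIV :: 'a set) = p ^ m"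
    and "p ^ m mod 4 = 3"
    and "\<alpha> \<noteq> 0" and "\<not> (\<exists>y. y ^ 2 = \<alpha>)"
    and "\<alpha>0 ^ (p ^ s) = \<alpha>"
    and "\<gamma> ^ 4 + 4 * \<alpha>0 = 0"
    and "\<beta> \<noteq> 0"
    and "i \<le> 2 * p ^ s" and "j \<le> 2 * p ^ s"
  shows "card (Idl\<^bsub>quot_ring (4 * p ^ s) (\<alpha>, \<beta>)\<^esub>
           {PIdl\<^bsub>Rx\<^esub> (binom_poly (4 * p ^ s) (\<alpha>, \<beta>)) +>\<^bsub>Rx\<^esub>
              ([^]\<^bsub>Rx\<^esub>) (quad_poly \<gamma> \<gamma>) i \<otimes>\<^bsub>Rx\<^esub> ([^]\<^bsub>Rx\<^esub>) (quad_poly (- \<gamma>) \<gamma>) j})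
         = p ^ (m * (8 * p ^ s - 2 * i - 2 * j))"
proof -
  define N where "N = 4 * p ^ s"
  define A :: "'a poly" where "A = Polynomial.monom 1 N - [:\<alpha>:]"
  define f1 :: "'a poly" where "f1 = [:\<gamma>^2/2, \<gamma>, 1:]"
  define f2 :: "'a poly" where "f2 = [:\<gamma>^2/2, -\<gamma>, 1:]"
  define wp where "wp = f1 ^ i * f2 ^ j"
  define qq where "qq = f1 ^ (2 * p ^ s - i) * f2 ^ (2 * p ^ s - j)"
  have ch: "CHAR('a) = p" by (rule char_eq[OF assms(1,5)])
  have two: "(2::'a) \<noteq> 0"
  proof
    assume "(2::'a) = 0"
    hence "of_nat 2 = (0::'a)" by simp
    hence "p dvd 2" using ch of_nat_eq_0_iff_char_dvd by metis
    hence "p \<le> 2" by (rule dvd_imp_le) simp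
    moreover have "p \<ge> 2" using assms(1) prime_ge_2_nat by blast
    ultimately have "p = 2" by simp
    thus False using assms(2) by simp
  qed
  have f12: "f1 * f2 = Polynomial.monom 1 4 - [:\<alpha>0:]"
    unfolding f1_def f2_def by (rule factor[OF assms(10) two])
  have AA: "A = (f1 * f2) ^ (p ^ s)"
    unfolding f12 A_def N_def frob[OF assms(1,5,2)] assms(9) by simp
  have wq: "wp * qq = A ^ 2"
  proof -
    have "wp * qq = f1 ^ (i + (2 * p ^ s - i)) * f2 ^ (j + (2 * p ^ s - j))"
      unfolding wp_def qq_def power_add by (simp add: algebra_simps)
    also have "\<dots> = (f1 * f2) ^ (p ^ s * 2)" using assms(12,13) by (simp add: power_mult_distrib mult.commute)
    finally show ?thesis unfolding AA by (simp add: power_mult)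
  qed
  have N0: "N > 0" unfolding N_def using assms(1) prime_gt_0_nat by simp
  have A0: "A \<noteq> 0"
  proof
    assume "A = 0"
    hence "Polynomial.coeff A N = 0" by simp
    thus False unfolding A_def using N0 by (cases N) (simp_all add: coeff_pCons)
  qed
  have f10: "f1 \<noteq> 0" and f20: "f2 \<noteq> 0" unfolding f1_def f2_def by simp_all
  have dq: "degree qq = 8 * p ^ s - 2 * i - 2 * j"
    unfolding qq_def using f10 f20 assms(12,13)
    by (simp add: degree_mult_eq degree_power_eq f1_def f2_def)
  have W: "([^]\<^bsub>Rx\<^esub>) (quad_poly \<gamma> \<gamma>) i \<otimes>\<^bsub>Rx\<^esub> ([^]\<^bsub>Rx\<^esub>) (quad_poly (- \<gamma>) \<gamma>) j = mk wp 0"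
    unfolding quad_mk pow_mk mult_mk wp_def f1_def f2_def by simp
  have B: "binom_poly (4 * p ^ s) (\<alpha>, \<beta>) = mk A (- [:\<beta>:])"
    unfolding binom_mk A_def N_def ..
  have "card (Idl\<^bsub>quot_ring (4 * p ^ s) (\<alpha>, \<beta>)\<^esub>
           {PIdl\<^bsub>Rx\<^esub> (binom_poly (4 * p ^ s) (\<alpha>, \<beta>)) +>\<^bsub>Rx\<^esub>
              ([^]\<^bsub>Rx\<^esub>) (quad_poly \<gamma> \<gamma>) i \<otimes>\<^bsub>Rx\<^esub> ([^]\<^bsub>Rx\<^esub>) (quad_poly (- \<gamma>) \<gamma>) j})
        = card (UNIV :: 'a set) ^ degree qq"
    unfolding quot_ring_def W B by (rule main_count[OF wq A0 assms(11)])
  also have "\<dots> = p ^ (m * (8 * p ^ s - 2 * i - 2 * j))"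
    unfolding dq assms(5) by (simp add: power_mult)
  finally show ?thesis .
qed

end
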